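(* Let $f:X\to\mathcal G$ be a convex function and $x_0\in\operatorname{dom} f$. (1) If $f(x_0)\in\operatorname{Min} f[X]$, then $x_0$ solves the scalarized Minty inequality: for all $x\in X$ with $f(x)\ne f(x_0)$ there exists $z^*\in C^-\setminus\{0\}$ with $\varphi_{f,z^*}(x)\ne-\infty$ and $\varphi'_{f,z^*}(x,x_0-x)<0$. (2) Let $M^*\subseteq C^-\setminus\{0\}$ be a finite set. If for all $x\in X$ with $f(x)\neq f(x_0)$ there exists $z^*\in M^*$ with $\varphi_{f,z^*}(x)\ne-\infty$ and $\varphi'_{f,z^*}(x,x_0-x)<0$, and if for every $x\in X$ and every $z^*\in M^*$ the function $t\mapsto\varphi_{f,z^*}(x_0+t(x-x_0))$ (for $t\in[0,1]$, $+\infty$ otherwise) is lower semicontinuous at $t=0$, then $f(x_0)\in\operatorname{Min}f[X]$.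
   Context: $X$ is a real linear space and $Z$ a real locally convex Hausdorff space with topological dual $Z^*$. $C\subseteq Z$ is a closed convex cone with $0\in C$ such that $C^-=\{z^*\in Z^*: z^*(c)\le 0\ \forall c\in C\}$ satisfies $C^-\setminus\{0\}\ne\emptyset$. Let $\mathcal G=\{A\subseteq Z: A=\operatorname{cl}\operatorname{co}(A+C)\}$, $A\oplus B=\operatorname{cl}\{a+b\}$, $tA=\{ta\}$ for $t>0$. $f:X\to\mathcal G$ is convex if $f(tx_1+(1-t)x_2)\supseteq tf(x_1)\oplus(1-t)f(x_2)$ for $t\in(0,1)$; $\operatorname{dom}f=\{x:f(x)\ne\emptyset\}$. $f(x_0)\in\operatorname{Min}f[X]$ means: for all $x\in X$, $f(x)\supseteq f(x_0)$ implies $f(x)=f(x_0)$. On $\overline{\mathbb R}$ use inf-addition $\dot+$ ($(-\infty)\dot+(+\infty)=+\infty$) and $r\ominus s=\inf\{t\in\mathbb R:r\le s\dot+t\}$ ($\inf\emptyset=+\infty$). $\varphi_{f,z^*}(x)=\inf\{-z^*(z):z\in f(x)\}$ ($+\infty$ if $f(x)=\emptyset$), $\varphi'_{f,z^*}(x,u)=\inf_{t>0}\frac1t\big(\varphi_{f,z^*}(x+tu)\ominus\varphi_{f,z^*}(x)\big)$. *)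

theory Defs
  imports "HOL-Analysis.Analysis"
begin

text \<open>Z is a real locally convex Hausdorff topological vector space: the type class
  t2_space gives Hausdorff; the predicate below gives continuity of the vector operations
  and a neighbourhood base of convex open sets.\<close>
definition lc_tvs :: "('z::{real_vector,t2_space}) itself \<Rightarrow> bool" where
  "lc_tvs _ \<longleftrightarrow>
     continuous_on UNIV (\<lambda>p::'z \<times> 'z. fst p + snd p) \<and>
     continuous_on UNIV (\<lambda>p::real \<times> 'z. fst p *\<^sub>R snd p) \<and>
     (\<forall>U (z::'z). open U \<and> z \<in> U \<longrightarrow> (\<exists>V. open V \<and> convex V \<and> z \<in> V \<and> V \<subseteq> U))"

definition top_dual :: "('z::{real_vector,topological_space} \<Rightarrow> real) set" where
  "top_dual = {zs. linear zs \<and> continuous_on UNIV zs}"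

definition neg_dual_cone :: "('z::{real_vector,topological_space}) set \<Rightarrow> ('z \<Rightarrow> real) set" where
  "neg_dual_cone C = {zs \<in> top_dual. \<forall>c\<in>C. zs c \<le> 0}"

definition sum_set :: "'z::real_vector set \<Rightarrow> 'z set \<Rightarrow> 'z set" where
  "sum_set A B = {a + b | a b. a \<in> A \<and> b \<in> B}"

definition G_space :: "('z::{real_vector,topological_space}) set \<Rightarrow> 'z set set" where
  "G_space C = {A. A = closure (convex hull (sum_set A C))}"

definition oplus_set :: "'z::{real_vector,topological_space} set \<Rightarrow> 'z set \<Rightarrow> 'z set" where
  "oplus_set A B = closure (sum_set A B)"

definition sv_convex :: "('x::real_vector \<Rightarrow> 'z::{real_vector,topological_space} set) \<Rightarrow> bool" where
  "sv_convex f \<longleftrightarrow> (\<forall>x1 x2 t. 0 < t \<and> t < 1 \<longrightarrow>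
      oplus_set ((\<lambda>z. t *\<^sub>R z) ` f x1) ((\<lambda>z. (1 - t) *\<^sub>R z) ` f x2)
        \<subseteq> f (t *\<^sub>R x1 + (1 - t) *\<^sub>R x2))"

definition sv_dom :: "('x \<Rightarrow> 'z set) \<Rightarrow> 'x set" where
  "sv_dom f = {x. f x \<noteq> {}}"

definition is_Min_value :: "('x \<Rightarrow> 'z set) \<Rightarrow> 'x \<Rightarrow> bool" where
  "is_Min_value f x0 \<longleftrightarrow> (\<forall>x. f x0 \<subseteq> f x \<longrightarrow> f x = f x0)"

text \<open>Inf-difference on extended reals (ereal addition is the inf-addition:
  (-\<infinity>) + \<infinity> = \<infinity>); Inf of the empty set is \<infinity>.\<close>
definition ediff :: "ereal \<Rightarrow> ereal \<Rightarrow> ereal" where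
  "ediff r s = Inf (ereal ` {t. r \<le> s + ereal t})"

definition phi :: "('x \<Rightarrow> 'z set) \<Rightarrow> ('z \<Rightarrow> real) \<Rightarrow> 'x \<Rightarrow> ereal" where
  "phi f zs x = Inf ((\<lambda>z. - ereal (zs z)) ` f x)"

definition phi_dir :: "('x::real_vector \<Rightarrow> 'z set) \<Rightarrow> ('z \<Rightarrow> real) \<Rightarrow> 'x \<Rightarrow> 'x \<Rightarrow> ereal" where
  "phi_dir f zs x u = (INF t\<in>{0<..}. ereal (1 / t) * ediff (phi f zs (x + t *\<^sub>R u)) (phi f zs x))"

definition lsc_at_pt :: "(real \<Rightarrow> ereal) \<Rightarrow> real \<Rightarrow> bool" where
  "lsc_at_pt g t0 \<longleftrightarrow> (\<forall>y < g t0. \<forall>\<^sub>F t in at t0. y < g t)"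

end

theory Submission
  imports Defs
begin


definition sublin :: "('a::real_vector \<Rightarrow> real) \<Rightarrow> bool" where
  "sublin p \<longleftrightarrow> (\<forall>x y. p (x + y) \<le> p x + p y) \<and> (\<forall>x c. 0 < c \<longrightarrow> p (c *\<^sub>R x) = c * p x)"

lemma sublin_0: assumes "sublin p" shows "p 0 = 0"
proof -
  have "p ((2::real) *\<^sub>R 0) = 2 * p 0" using assms unfolding sublin_def by (metis zero_less_numeral)
  then show ?thesis by simp
qed

lemma sublin_add: "sublin p \<Longrightarrow> p (x + y) \<le> p x + p y" unfolding sublin_def by blast
lemma sublin_scale: "sublin p \<Longrightarrow> 0 < c \<Longrightarrow> p (c *\<^sub>R x) = c * p x" unfolding sublin_def by blast

lemma sublin_lower: assumes "sublin p" shows "- p (- x) \<le> p x"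
  using sublin_add[OF assms, of x "-x"] sublin_0[OF assms] by simp

definition Sfun :: "('a::real_vector \<Rightarrow> real) \<Rightarrow> 'a \<Rightarrow> real \<Rightarrow> 'a \<Rightarrow> real" where
  "Sfun p w c y = (INF t\<in>{0..}. p (y + t *\<^sub>R w) - t * c)"

lemma Sfun_bdd:
  assumes p: "sublin p" and c: "c \<le> p w" and t: "t \<ge> 0"
  shows "- p (- y) \<le> p (y + t *\<^sub>R w) - t * c"
proof -
  have "p (t *\<^sub>R w) \<le> p (y + t *\<^sub>R w) + p (- y)"
    using sublin_add[OF p, of "y + t *\<^sub>R w" "-y"] by simp
  moreover have "p (t *\<^sub>R w) = t * p w"
  proof (cases "t = 0")
    case True then show ?thesis using sublin_0[OF p] by simp
  next
    case False then show ?thesis using sublin_scale[OF p] t by simp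
  qed
  moreover have "t * c \<le> t * p w" using c t by (simp add: mult_left_mono)
  ultimately show ?thesis by linarith
qed

lemma Sfun_bdd_below:
  assumes p: "sublin p" and c: "c \<le> p w"
  shows "bdd_below ((\<lambda>t. p (y + t *\<^sub>R w) - t * c) ` {0..})"
  using Sfun_bdd[OF p c] by (intro bdd_belowI2[where m="- p (- y)"]) auto

lemma Sfun_le:
  assumes p: "sublin p" and c: "c \<le> p w" and t: "t \<ge> 0"
  shows "Sfun p w c y \<le> p (y + t *\<^sub>R w) - t * c"
  unfolding Sfun_def using t by (intro cINF_lower Sfun_bdd_below[OF p c]) auto

lemma Sfun_ge:
  assumes "\<And>t. t \<ge> 0 \<Longrightarrow> a \<le> p (y + t *\<^sub>R w) - t * c"
  shows "a \<le> Sfun p w c y"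
  unfolding Sfun_def using assms by (intro cINF_greatest) auto

lemma Sfun_le_p:
  assumes p: "sublin p" and c: "c \<le> p w"
  shows "Sfun p w c y \<le> p y"
  using Sfun_le[OF p c, of 0 y] by simp

lemma Sfun_sublin:
  assumes p: "sublin p" and c: "c \<le> p w"
  shows "sublin (Sfun p w c)"
  unfolding sublin_def
proof safe
  fix y1 y2
  let ?S = "Sfun p w c"
  have "?S (y1 + y2) - (p (y2 + t2 *\<^sub>R w) - t2 * c) \<le> ?S y1" if t2: "t2 \<ge> 0" for t2
  proof (rule Sfun_ge)
    fix t1 :: real assume t1: "t1 \<ge> 0"
    have "?S (y1 + y2) \<le> p ((y1 + y2) + (t1 + t2) *\<^sub>R w) - (t1 + t2) * c"
      using Sfun_le[OF p c] t1 t2 by simp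
    also have "p ((y1 + y2) + (t1 + t2) *\<^sub>R w) \<le> p (y1 + t1 *\<^sub>R w) + p (y2 + t2 *\<^sub>R w)"
      using sublin_add[OF p, of "y1 + t1 *\<^sub>R w" "y2 + t2 *\<^sub>R w"]
      by (simp add: algebra_simps scaleR_add_left)
    finally show "?S (y1 + y2) - (p (y2 + t2 *\<^sub>R w) - t2 * c) \<le> p (y1 + t1 *\<^sub>R w) - t1 * c"
      by (simp add: algebra_simps)
  qed
  then have "?S (y1 + y2) - ?S y1 \<le> ?S y2"
    by (intro Sfun_ge) (auto simp: algebra_simps)
  then show "?S (y1 + y2) \<le> ?S y1 + ?S y2" by simp
next
  fix y and l :: real assume l: "0 < l"
  let ?S = "Sfun p w c"
  have "?S (l *\<^sub>R y) / l \<le> ?S y"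
  proof (rule Sfun_ge)
    fix s :: real assume s: "s \<ge> 0"
    have "?S (l *\<^sub>R y) \<le> p (l *\<^sub>R y + (l * s) *\<^sub>R w) - (l * s) * c"
      using Sfun_le[OF p c] s l by simp
    also have "p (l *\<^sub>R y + (l * s) *\<^sub>R w) = l * p (y + s *\<^sub>R w)"
      using sublin_scale[OF p l, of "y + s *\<^sub>R w"] by (simp add: scaleR_add_right)
    finally show "?S (l *\<^sub>R y) / l \<le> p (y + s *\<^sub>R w) - s * c"
      using l by (simp add: field_simps)
  qed
  moreover have "l * ?S y \<le> ?S (l *\<^sub>R y)"
  proof (rule Sfun_ge)
    fix t :: real assume t: "t \<ge> 0"
    have "?S y \<le> p (y + (t / l) *\<^sub>R w) - (t / l) * c"
      using Sfun_le[OF p c, of "t / l" y] t l by simp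
    moreover have "l * p (y + (t / l) *\<^sub>R w) = p (l *\<^sub>R y + t *\<^sub>R w)"
      using sublin_scale[OF p l, of "y + (t / l) *\<^sub>R w"] l by (simp add: scaleR_add_right)
    ultimately have "l * ?S y \<le> l * (p (y + (t / l) *\<^sub>R w) - (t / l) * c)"
      using l by (simp add: mult_left_mono)
    also have "\<dots> = p (l *\<^sub>R y + t *\<^sub>R w) - t * c"
      using \<open>l * p (y + (t / l) *\<^sub>R w) = _\<close> l by (simp add: right_diff_distrib)
    finally show "l * ?S y \<le> p (l *\<^sub>R y + t *\<^sub>R w) - t * c" .
  qed
  ultimately show "?S (l *\<^sub>R y) = l * ?S y"
    using l by (simp add: field_simps)
qed

lemma exists_minimal_sublin:
  fixes p0 :: "'a::real_vector \<Rightarrow> real"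
  assumes p0: "sublin p0"
  shows "\<exists>m. sublin m \<and> (\<forall>y. m y \<le> p0 y) \<and>
           (\<forall>q. sublin q \<and> (\<forall>y. q y \<le> m y) \<longrightarrow> q = m)"
proof -
  define SS where "SS = {q. sublin q \<and> (\<forall>y. q y \<le> p0 y)}"
  define r where "r = {(q1, q2). q1 \<in> SS \<and> q2 \<in> SS \<and> (\<forall>y. q2 y \<le> q1 y)}"
  have p0SS: "p0 \<in> SS" unfolding SS_def using p0 by auto
  have lowb: "- p0 (- y) \<le> q y" if "q \<in> SS" for q y
  proof -
    have "- q (- y) \<le> q y" using sublin_lower that unfolding SS_def by blast
    moreover have "q (- y) \<le> p0 (- y)" using that unfolding SS_def by blast
    ultimately show ?thesis by linarith
  qed
  have Field: "Field r = SS" unfolding r_def Field_def by auto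
  have po: "Partial_order r"
    unfolding partial_order_on_def preorder_on_def refl_on_def trans_def antisym_def Field
    by (auto simp: r_def intro!: ext intro: order.trans order.antisym)
  have ub: "\<exists>u\<in>Field r. \<forall>a\<in>C. (a, u) \<in> r" if C: "C \<in> Chains r" for C
  proof (cases "C = {}")
    case True then show ?thesis using p0SS Field by auto
  next
    case False
    have CSS: "C \<subseteq> SS" using C unfolding Chains_def r_def by auto
    have ch: "\<And>a b. a \<in> C \<Longrightarrow> b \<in> C \<Longrightarrow> (\<forall>y. b y \<le> a y) \<or> (\<forall>y. a y \<le> b y)"
      using C unfolding Chains_def r_def by blast
    define u where "u y = (INF q\<in>C. q y)" for y
    have bdd: "bdd_below ((\<lambda>q. q y) ` C)" for y
      using lowb CSS by (intro bdd_belowI2[where m="- p0 (- y)"]) auto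
    have u_le: "u y \<le> q y" if "q \<in> C" for q y
      unfolding u_def using that bdd by (intro cINF_lower) auto
    have u_ge: "a \<le> u y" if "\<And>q. q \<in> C \<Longrightarrow> a \<le> q y" for a y
      unfolding u_def using that False by (intro cINF_greatest) auto
    have subl: "sublin q" if "q \<in> C" for q using that CSS unfolding SS_def by auto
    have "sublin u"
      unfolding sublin_def
    proof safe
      fix x y
      have "u (x + y) - q2 y \<le> u x" if q2: "q2 \<in> C" for q2
      proof (rule u_ge)
        fix q1 assume q1: "q1 \<in> C"
        show "u (x + y) - q2 y \<le> q1 x"
        proof (cases "\<forall>z. q2 z \<le> q1 z")
          case True
          have "u (x + y) \<le> q2 (x + y)" using u_le q2 by blast
          also have "\<dots> \<le> q2 x + q2 y" using sublin_add subl q2 by blast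
          finally show ?thesis using True[rule_format, of x] by linarith
        next
          case False
          then have "\<forall>z. q1 z \<le> q2 z" using ch q1 q2 by blast
          have "u (x + y) \<le> q1 (x + y)" using u_le q1 by blast
          also have "\<dots> \<le> q1 x + q1 y" using sublin_add subl q1 by blast
          finally show ?thesis using \<open>\<forall>z. q1 z \<le> q2 z\<close>[rule_format, of y] by linarith
        qed
      qed
      then have "u (x + y) - u x \<le> u y" by (intro u_ge) (auto simp: algebra_simps)
      then show "u (x + y) \<le> u x + u y" by simp
    next
      fix x and c :: real assume c: "0 < c"
      have "u (c *\<^sub>R x) / c \<le> u x"
      proof (rule u_ge)
        fix q assume q: "q \<in> C"
        have "u (c *\<^sub>R x) \<le> q (c *\<^sub>R x)" using u_le q by blast
        also have "\<dots> = c * q x" using sublin_scale subl q c by blast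
        finally show "u (c *\<^sub>R x) / c \<le> q x" using c by (simp add: field_simps)
      qed
      moreover have "c * u x \<le> u (c *\<^sub>R x)"
      proof (rule u_ge)
        fix q assume q: "q \<in> C"
        have "c * u x \<le> c * q x" using u_le q c by (simp add: mult_left_mono)
        also have "\<dots> = q (c *\<^sub>R x)" using sublin_scale subl q c by metis
        finally show "c * u x \<le> q (c *\<^sub>R x)" .
      qed
      ultimately show "u (c *\<^sub>R x) = c * u x" using c by (simp add: field_simps)
    qed
    moreover have "u y \<le> p0 y" for y
    proof -
      obtain q where "q \<in> C" using False by blast
      then have "q y \<le> p0 y" using CSS unfolding SS_def by blast
      then show ?thesis using u_le[OF \<open>q \<in> C\<close>, of y] by linarith
    qed
    ultimately have "u \<in> SS" unfolding SS_def by auto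
    then show ?thesis using Field CSS u_le unfolding r_def by blast
  qed
  obtain m where m: "m \<in> Field r" and mmin: "\<forall>a\<in>Field r. (m, a) \<in> r \<longrightarrow> a = m"
    using Zorns_po_lemma[OF po ub] by blast
  show ?thesis
  proof (intro exI conjI allI impI)
    show "sublin m" using m Field SS_def by auto
    show "m y \<le> p0 y" for y using m Field SS_def by auto
    fix q assume q: "sublin q \<and> (\<forall>y. q y \<le> m y)"
    then have "q \<in> SS" using m Field unfolding SS_def by (auto intro: order.trans)
    then show "q = m" using mmin q m Field unfolding r_def by auto
  qed
qed

lemma minimal_sublin_linear:
  fixes m :: "'a::real_vector \<Rightarrow> real"
  assumes m: "sublin m" and mmin: "\<forall>q. sublin q \<and> (\<forall>y. q y \<le> m y) \<longrightarrow> q = m"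
  shows "linear m"
proof -
  have additive: "m (x + y) = m x + m y" for x y
  proof -
    have "Sfun m x (m x) = m"
      using mmin Sfun_sublin[OF m, of "m x" x] Sfun_le_p[OF m, of "m x" x] by auto
    then have "m y \<le> m (y + 1 *\<^sub>R x) - 1 * m x"
      using Sfun_le[OF m, of "m x" x 1 y] by simp
    then show ?thesis using sublin_add[OF m, of x y] by (simp add: add.commute)
  qed
  have neg: "m (- x) = - m x" for x
    using additive[of x "-x"] sublin_0[OF m] by simp
  have scale: "m (c *\<^sub>R x) = c * m x" for c x
  proof (cases "c > 0")
    case True then show ?thesis using sublin_scale[OF m] by blast
  next
    case False
    show ?thesis
    proof (cases "c = 0")
      case True then show ?thesis using sublin_0[OF m] by simp
    next
      case False
      then have "- c > 0" using \<open>\<not> c > 0\<close> by simp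
      then have "m ((- c) *\<^sub>R x) = - c * m x" using sublin_scale[OF m] by blast
      then show ?thesis using neg[of "(- c) *\<^sub>R x"] by simp
    qed
  qed
  show ?thesis by (intro linearI additive) (simp add: scale)
qed

theorem hahn_banach_sublin:
  fixes p :: "'a::real_vector \<Rightarrow> real"
  assumes p: "sublin p" and w: "1 \<le> p w"
  shows "\<exists>g. linear g \<and> (\<forall>y. g y \<le> p y) \<and> 1 \<le> g w"
proof -
  have p0: "sublin (Sfun p w 1)" using Sfun_sublin[OF p w] .
  obtain m where m: "sublin m" and mle: "\<forall>y. m y \<le> Sfun p w 1 y"
    and mmin: "\<forall>q. sublin q \<and> (\<forall>y. q y \<le> m y) \<longrightarrow> q = m"
    using exists_minimal_sublin[OF p0] by blast
  have lin: "linear m" using minimal_sublin_linear[OF m mmin] .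
  have "m y \<le> p y" for y using mle Sfun_le_p[OF p w] order.trans by blast
  moreover have "m (- w) \<le> -1"
    using mle[rule_format, of "-w"] Sfun_le[OF p w, of 1 "-w"] sublin_0[OF p] by simp
  then have "1 \<le> m w" using linear_neg[OF lin, of w] by simp
  ultimately show ?thesis using lin by blast
qed



lemma lc_cont_add:
  assumes lc: "lc_tvs TYPE('z::{real_vector,t2_space})"
  shows "continuous_on UNIV (\<lambda>x::'z. z + x)"
proof -
  have c: "continuous_on UNIV (\<lambda>p::'z \<times> 'z. fst p + snd p)" using lc unfolding lc_tvs_def by blast
  have "continuous_on UNIV (\<lambda>x::'z. (\<lambda>p::'z \<times> 'z. fst p + snd p) (z, x))"
    by (rule continuous_on_compose2[OF c]) (auto intro!: continuous_intros)
  then show ?thesis by simp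
qed

lemma lc_cont_scale2:
  assumes lc: "lc_tvs TYPE('z::{real_vector,t2_space})"
    and f: "continuous_on UNIV f" and g: "continuous_on UNIV (g :: 'a::topological_space \<Rightarrow> 'z)"
  shows "continuous_on UNIV (\<lambda>x. f x *\<^sub>R g x)"
proof -
  have c: "continuous_on UNIV (\<lambda>p::real \<times> 'z. fst p *\<^sub>R snd p)" using lc unfolding lc_tvs_def by blast
  have "continuous_on UNIV (\<lambda>x. (\<lambda>p::real \<times> 'z. fst p *\<^sub>R snd p) (f x, g x))"
    by (rule continuous_on_compose2[OF c]) (auto intro!: continuous_intros f g)
  then show ?thesis by simp
qed

lemma lc_cont_scale:
  assumes lc: "lc_tvs TYPE('z::{real_vector,t2_space})"
  shows "continuous_on UNIV (\<lambda>x::'z. c *\<^sub>R x)"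
  using lc_cont_scale2[OF lc, of "\<lambda>_. c" "\<lambda>x. x"] by (auto intro!: continuous_intros)

lemma lc_cont_ray:
  assumes lc: "lc_tvs TYPE('z::{real_vector,t2_space})"
  shows "continuous_on UNIV (\<lambda>t::real. z + t *\<^sub>R (v::'z))"
proof -
  have "continuous_on UNIV (\<lambda>t::real. t *\<^sub>R v)"
    using lc_cont_scale2[OF lc, of "\<lambda>t. t" "\<lambda>_. v"] by (auto intro!: continuous_intros)
  then show ?thesis
    using continuous_on_compose2[OF lc_cont_add[OF lc, of z], of UNIV "\<lambda>t. t *\<^sub>R v"] by simp
qed

lemma open_vimage_UNIV: "continuous_on UNIV h \<Longrightarrow> open D \<Longrightarrow> open (h -` D)"
  using continuous_on_open_vimage[of UNIV h] by auto

lemma lc_ray_open: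
  assumes lc: "lc_tvs TYPE('z::{real_vector,t2_space})" and U: "open U" and z: "z \<in> U"
  shows "\<exists>d>0. \<forall>t. \<bar>t\<bar> < d \<longrightarrow> z + t *\<^sub>R (v::'z) \<in> U"
proof -
  let ?h = "\<lambda>t::real. z + t *\<^sub>R v"
  have "isCont ?h 0" using lc_cont_ray[OF lc, of z v] continuous_on_eq_continuous_at[of UNIV ?h] by auto
  then have "(?h \<longlongrightarrow> z) (at 0)" by (simp add: continuous_at)
  then have "eventually (\<lambda>t. ?h t \<in> U) (at 0)" using topological_tendstoD U z by blast
  then obtain d where d: "d > 0" "\<forall>t. t \<noteq> 0 \<and> dist t 0 < d \<longrightarrow> ?h t \<in> U"
    unfolding eventually_at by auto
  show ?thesis using d z by (intro exI[of _ d]) (auto simp: dist_real_def, metis add.right_neutral scaleR_zero_left)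
qed

definition mgauge :: "'z::real_vector set \<Rightarrow> 'z \<Rightarrow> real" where
  "mgauge D y = Inf {l. 0 < l \<and> inverse l *\<^sub>R y \<in> D}"

lemma separation:
  fixes U B :: "'z::{real_vector,t2_space} set"
  assumes lc: "lc_tvs TYPE('z)" and B: "convex B" "B \<noteq> {}"
    and U: "open U" "convex U" "z0 \<in> U" and disj: "U \<inter> B = {}" and b0B: "b0 \<in> B"
  shows "\<exists>(g::'z \<Rightarrow> real) e. linear g \<and> continuous_on UNIV g \<and> e > 0 \<and> 1 \<le> g (b0 - z0) \<and> (\<forall>b\<in>B. g z0 + e \<le> g b)"
proof -
  define D where "D = {u - b + (b0 - z0) | u b. u \<in> U \<and> b \<in> B}"
  define w where "w = b0 - z0"
  have D0: "0 \<in> D" unfolding D_def using U(3) b0B by force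
  have wD: "w \<notin> D"
  proof
    assume "w \<in> D"
    then obtain u b where "u \<in> U" "b \<in> B" "w = u - b + (b0 - z0)" unfolding D_def by blast
    then have "u = b" unfolding w_def by (simp add: algebra_simps)
    then show False using disj \<open>u \<in> U\<close> \<open>b \<in> B\<close> by blast
  qed
  have Dconv: "convex D"
    unfolding convex_alt
  proof safe
    fix x y and l :: real assume x: "x \<in> D" and y: "y \<in> D" and l: "0 \<le> l" "l \<le> 1"
    obtain u1 b1 where 1: "u1 \<in> U" "b1 \<in> B" "x = u1 - b1 + (b0 - z0)" using x unfolding D_def by blast
    obtain u2 b2 where 2: "u2 \<in> U" "b2 \<in> B" "y = u2 - b2 + (b0 - z0)" using y unfolding D_def by blast
    have "(1 - l) *\<^sub>R u1 + l *\<^sub>R u2 \<in> U" using U(2) 1 2 l unfolding convex_alt by blast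
    moreover have "(1 - l) *\<^sub>R b1 + l *\<^sub>R b2 \<in> B" using B(1) 1 2 l unfolding convex_alt by blast
    moreover have "(1 - l) *\<^sub>R x + l *\<^sub>R y = ((1 - l) *\<^sub>R u1 + l *\<^sub>R u2) - ((1 - l) *\<^sub>R b1 + l *\<^sub>R b2) + (b0 - z0)"
      unfolding 1(3) 2(3) by (simp add: algebra_simps)
    ultimately show "(1 - l) *\<^sub>R x + l *\<^sub>R y \<in> D" unfolding D_def by blast
  qed
  have Dopen: "open D"
  proof -
    have "D = (\<Union>b\<in>B. (\<lambda>x. (- (b0 - z0 - b)) + x) -` U)"
      unfolding D_def by (auto simp: algebra_simps) (metis add_diff_cancel diff_add_eq)
    moreover have "open ((\<lambda>x. (- (b0 - z0 - b)) + x) -` U)" for b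
      by (rule open_vimage_UNIV[OF lc_cont_add[OF lc] U(1)])
    ultimately show ?thesis by auto
  qed
  let ?L = "\<lambda>y. {l. 0 < l \<and> inverse l *\<^sub>R y \<in> D}"
  have Lne: "?L y \<noteq> {}" for y
  proof -
    obtain d where d: "d > 0" "\<forall>t. \<bar>t\<bar> < d \<longrightarrow> 0 + t *\<^sub>R y \<in> D"
      using lc_ray_open[OF lc Dopen D0, of y] by blast
    then have "inverse (2 / d) *\<^sub>R y \<in> D" by auto
    then show ?thesis using d by (intro ex_in_conv[THEN iffD1] exI[of _ "2 / d"]) auto
  qed
  have Lbdd: "bdd_below (?L y)" for y by (intro bdd_belowI[of _ 0]) auto
  have mgauge_ge: "0 \<le> mgauge D y" for y
    unfolding mgauge_def using Lne by (intro cInf_greatest) auto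
  have mgauge_mem: "inverse l *\<^sub>R y \<in> D" if lt: "mgauge D y < l" for l y
  proof -
    obtain m where m: "m \<in> ?L y" "m < l" using lt Lne unfolding mgauge_def by (meson cInf_lessD)
    have l0: "l > 0" using m by auto
    have mem: "inverse m *\<^sub>R y \<in> D" using m by auto
    have "m / l \<ge> 0" "1 - m / l \<ge> 0" using m l0 by auto
    then have "(m / l) *\<^sub>R (inverse m *\<^sub>R y) + (1 - m / l) *\<^sub>R 0 \<in> D"
      using convexD[OF Dconv mem D0, of "m / l" "1 - m / l"] by simp
    moreover have "(m / l) *\<^sub>R (inverse m *\<^sub>R y) = inverse l *\<^sub>R y" using m by (auto simp: field_simps)
    ultimately show ?thesis by (simp only: scaleR_zero_right add_0_right)
  qed
  have mgauge_le: "mgauge D y \<le> l" if "0 < l" "inverse l *\<^sub>R y \<in> D" for l y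
    unfolding mgauge_def using that Lbdd by (intro cInf_lower) auto
  have sub: "sublin (mgauge D)"
    unfolding sublin_def
  proof safe
    fix x y
    have "mgauge D (x + y) \<le> a + b" if a: "mgauge D x < a" and b: "mgauge D y < b" for a b
    proof -
      have a0: "a > 0" "b > 0" using a b mgauge_ge[of x] mgauge_ge[of y] by auto
      have "a / (a + b) \<ge> 0" "1 - a / (a + b) \<ge> 0" using a0 by (auto simp: field_simps)
      then have "(a / (a + b)) *\<^sub>R (inverse a *\<^sub>R x) + (1 - a / (a + b)) *\<^sub>R (inverse b *\<^sub>R y) \<in> D"
        using convexD[OF Dconv mgauge_mem[OF a] mgauge_mem[OF b], of "a / (a + b)" "1 - a / (a + b)"]
        by simp
      moreover have "(a / (a + b)) *\<^sub>R (inverse a *\<^sub>R x) + (1 - a / (a + b)) *\<^sub>R (inverse b *\<^sub>R y)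
          = inverse (a + b) *\<^sub>R (x + y)"
        using a0 by (simp add: field_simps scaleR_add_right)
      ultimately show ?thesis using mgauge_le a0 by auto
    qed
    note * = this
    have **: "mgauge D (x + y) - b \<le> mgauge D x" if yb: "mgauge D y < b" for b
    proof (rule dense_ge)
      fix a assume "mgauge D x < a"
      then have "mgauge D (x + y) \<le> a + b" using *[of a b] yb by blast
      then show "mgauge D (x + y) - b \<le> a" by linarith
    qed
    have "mgauge D (x + y) - mgauge D x \<le> mgauge D y"
    proof (rule dense_ge)
      fix b assume "mgauge D y < b"
      then show "mgauge D (x + y) - mgauge D x \<le> b" using **[of b] by linarith
    qed
    then show "mgauge D (x + y) \<le> mgauge D x + mgauge D y" by linarith
  next
    fix y and c :: real assume c: "0 < c"
    have "mgauge D (c *\<^sub>R y) \<le> c * a" if "mgauge D y < a" for a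
    proof -
      have "a > 0" using that mgauge_ge[of y] by auto
      moreover have "inverse (c * a) *\<^sub>R (c *\<^sub>R y) = inverse a *\<^sub>R y" using c by simp
      ultimately have m: "inverse (c * a) *\<^sub>R (c *\<^sub>R y) \<in> D" using mgauge_mem[OF that] by (simp only:)
      show ?thesis using mgauge_le[OF _ m] c \<open>a > 0\<close> by simp
    qed
    then have 1: "mgauge D (c *\<^sub>R y) / c \<le> a" if "mgauge D y < a" for a
      using that c by (simp add: divide_le_eq mult.commute)
    have "c * mgauge D y \<le> a" if "mgauge D (c *\<^sub>R y) < a" for a
    proof -
      have a: "a > 0" using that mgauge_ge[of "c *\<^sub>R y"] by auto
      have "inverse (a / c) *\<^sub>R y = inverse a *\<^sub>R (c *\<^sub>R y)" using c a by (simp add: field_simps)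
      then have "mgauge D y \<le> a / c" using mgauge_le[of "a / c" y] mgauge_mem[OF that] c a by auto
      then show ?thesis using c by (simp add: field_simps)
    qed
    then have "c * mgauge D y \<le> mgauge D (c *\<^sub>R y)" using dense_ge by blast
    moreover have "mgauge D (c *\<^sub>R y) / c \<le> mgauge D y" using 1 dense_ge by blast
    ultimately show "mgauge D (c *\<^sub>R y) = c * mgauge D y" using c by (simp add: field_simps)
  qed
  have mgauge_lt1: "mgauge D y < 1" if yD: "y \<in> D" for y
  proof -
    obtain d where d: "d > 0" "\<forall>t. \<bar>t\<bar> < d \<longrightarrow> y + t *\<^sub>R y \<in> D"
      using lc_ray_open[OF lc Dopen yD, of y] by blast
    have "y + (d/2) *\<^sub>R y \<in> D" using d by auto
    moreover have "y + (d/2) *\<^sub>R y = inverse (inverse (1 + d/2)) *\<^sub>R y" by (simp add: algebra_simps)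
    ultimately have "mgauge D y \<le> inverse (1 + d/2)" using mgauge_le d by (metis inverse_positive_iff_positive add_pos_pos zero_less_one half_gt_zero)
    also have "\<dots> < 1" using d by (simp add: field_simps)
    finally show ?thesis .
  qed
  have gw: "1 \<le> mgauge D w"
  proof (rule ccontr)
    assume "\<not> 1 \<le> mgauge D w"
    then have "inverse 1 *\<^sub>R w \<in> D" using mgauge_mem[of w 1] by linarith
    then show False using wD by simp
  qed
  obtain g where lin: "linear g" and gp: "\<forall>y. g y \<le> mgauge D y" and g1: "1 \<le> g w"
    using hahn_banach_sublin[OF sub gw] by blast
  have gD: "g y < 1" if "y \<in> D" for y using gp mgauge_lt1[OF that] by (meson le_less_trans)
  have sep: "g u < g b" if "u \<in> U" "b \<in> B" for u b
  proof -
    have "u - b + w \<in> D" unfolding D_def w_def using that by blast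
    then have "g (u - b + w) < 1" by (rule gD)
    then show ?thesis using g1 linear_add[OF lin] linear_diff[OF lin] by simp
  qed
  have cont: "continuous_on UNIV g"
    unfolding continuous_on_open_invariant
  proof (intro allI impI)
    fix Ob :: "real set" assume Ob: "open Ob"
    have "open (g -` Ob)"
      unfolding open_subopen[of "g -` Ob"]
    proof
      fix y assume y: "y \<in> g -` Ob"
      obtain e where e: "e > 0" "ball (g y) e \<subseteq> Ob" using Ob y open_contains_ball by blast
      define N where "N = (\<lambda>z. inverse e *\<^sub>R (- y + z)) -` D \<inter> (\<lambda>z. (- inverse e) *\<^sub>R (- y + z)) -` D"
      have cN1: "continuous_on UNIV (\<lambda>z. c *\<^sub>R (- y + z))" for c
        using continuous_on_compose2[OF lc_cont_scale[OF lc, of c] lc_cont_add[OF lc, of "-y"]] by simp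
      have "open N" unfolding N_def by (intro open_Int open_vimage_UNIV[OF cN1 Dopen])
      moreover have "y \<in> N" unfolding N_def using D0 by simp
      moreover have "N \<subseteq> g -` Ob"
      proof
        fix z assume z: "z \<in> N"
        have "g (inverse e *\<^sub>R (- y + z)) < 1" "g ((- inverse e) *\<^sub>R (- y + z)) < 1"
          using z gD unfolding N_def by auto
        then have "inverse e * (g z - g y) < 1" "- inverse e * (g z - g y) < 1"
          by (simp_all only: linear_scale[OF lin] linear_add[OF lin] linear_neg[OF lin]) (simp_all add: algebra_simps)
        then have "\<bar>g z - g y\<bar> < e" using e by (auto simp: field_simps abs_less_iff)
        then show "z \<in> g -` Ob" using e(2) by (auto simp: dist_real_def)
      qed
      ultimately show "\<exists>T. open T \<and> y \<in> T \<and> T \<subseteq> g -` Ob" by blast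
    qed
    then show "\<exists>A. open A \<and> A \<inter> UNIV = g -` Ob \<inter> UNIV" by auto
  qed
  obtain d where d: "d > 0" "\<forall>t. \<bar>t\<bar> < d \<longrightarrow> z0 + t *\<^sub>R w \<in> U"
    using lc_ray_open[OF lc U(1) U(3), of w] by blast
  have "g z0 + d / 2 \<le> g b" if "b \<in> B" for b
  proof -
    have "g (z0 + (d/2) *\<^sub>R w) < g b" using sep[OF _ that] d by auto
    moreover have "g (z0 + (d/2) *\<^sub>R w) = g z0 + (d/2) * g w"
      using linear_add[OF lin] linear_scale[OF lin] by simp
    moreover have "d / 2 \<le> (d/2) * g w" using g1 d by simp
    ultimately show ?thesis by linarith
  qed
  then have "linear g \<and> continuous_on UNIV g \<and> d / 2 > 0 \<and> 1 \<le> g (b0 - z0) \<and> (\<forall>b\<in>B. g z0 + d / 2 \<le> g b)"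
    using lin cont d g1 unfolding w_def by auto
  then show ?thesis by blast
qed



lemma phi_le: "z \<in> f x \<Longrightarrow> phi f zs x \<le> ereal (- zs z)"
  unfolding phi_def by (rule INF_lower2) auto

lemma phi_lt_iff: "phi f zs x < c \<longleftrightarrow> (\<exists>z\<in>f x. ereal (- zs z) < c)"
  unfolding phi_def by (simp add: INF_less_iff)

lemma phi_mono: "f u \<subseteq> f v \<Longrightarrow> phi f zs v \<le> phi f zs u"
  unfolding phi_def by (rule INF_superset_mono) auto

lemma phi_empty: "f x = {} \<Longrightarrow> phi f zs x = \<infinity>"
  unfolding phi_def by (simp add: top_ereal_def)

lemma phi_ne: "f x \<noteq> {} \<Longrightarrow> phi f zs x < \<infinity>"
proof -
  assume "f x \<noteq> {}" then obtain z where "z \<in> f x" by blast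
  then have "phi f zs x \<le> ereal (- zs z)" by (rule phi_le)
  then show ?thesis by (rule order.strict_trans1) simp
qed

lemma ediff_PInf: "ediff r \<infinity> = - \<infinity>"
  unfolding ediff_def
proof (rule ereal_bot)
  fix B show "Inf (ereal ` {t. r \<le> \<infinity> + ereal t}) \<le> ereal B"
    by (rule Inf_lower) auto
qed

lemma ediff_neg: assumes "ediff r (ereal q) < 0" shows "r < ereal q"
proof -
  from assms obtain t where t: "r \<le> ereal q + ereal t" "ereal t < 0"
    unfolding ediff_def by (auto simp: INF_less_iff)
  have "ereal q + ereal t < ereal q" using t(2) by simp
  then show ?thesis by (rule order.strict_trans1[OF t(1)])
qed

lemma ediff_lt: assumes "r < ereal q" shows "ediff r (ereal q) < 0"
proof -
  obtain p where p: "r < ereal p" "ereal p < ereal q" using ereal_dense2[OF assms] by blast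
  have "r \<le> ereal q + ereal (p - q)" using p by simp
  then have "ediff r (ereal q) \<le> ereal (p - q)" unfolding ediff_def by (intro Inf_lower) auto
  also have "\<dots> < 0" using p by simp
  finally show ?thesis .
qed

lemma ereal_mult_neg: "0 < c \<Longrightarrow> e < 0 \<Longrightarrow> ereal c * e < 0"
  by (cases e) (auto simp: mult_pos_neg)

lemma ereal_mult_neg_rev: "0 < c \<Longrightarrow> ereal c * e < 0 \<Longrightarrow> e < 0"
  by (cases e) (auto simp: zero_less_mult_iff mult_less_0_iff)

lemma phi_dir_le: "0 < t \<Longrightarrow> phi_dir f zs x u \<le> ereal (1 / t) * ediff (phi f zs (x + t *\<^sub>R u)) (phi f zs x)"
  unfolding phi_dir_def by (rule INF_lower) auto

lemma sv_mem:
  assumes fc: "sv_convex f" and l: "0 < l" "l < 1" and a: "a \<in> f u" and b: "b \<in> f v"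
  shows "l *\<^sub>R a + (1 - l) *\<^sub>R b \<in> f (l *\<^sub>R u + (1 - l) *\<^sub>R v)"
proof -
  have "l *\<^sub>R a + (1 - l) *\<^sub>R b \<in> sum_set ((\<lambda>z. l *\<^sub>R z) ` f u) ((\<lambda>z. (1 - l) *\<^sub>R z) ` f v)"
    unfolding sum_set_def using a b by blast
  then have "l *\<^sub>R a + (1 - l) *\<^sub>R b \<in> oplus_set ((\<lambda>z. l *\<^sub>R z) ` f u) ((\<lambda>z. (1 - l) *\<^sub>R z) ` f v)"
    unfolding oplus_set_def using closure_subset by blast
  then show ?thesis using fc l unfolding sv_convex_def by blast
qed

lemma phi_conv:
  assumes fc: "sv_convex f" and lin: "linear zs" and l: "0 < l" "l < 1"
    and u: "phi f zs u < ereal r1" and v: "phi f zs v \<le> ereal r2"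
  shows "phi f zs (l *\<^sub>R u + (1 - l) *\<^sub>R v) < ereal (l * r1 + (1 - l) * r2)"
proof -
  obtain r1' where r1': "phi f zs u < ereal r1'" "r1' < r1" using ereal_dense2[OF u] by auto
  define e where "e = l * (r1 - r1') / (1 - l)"
  have e: "e > 0" using l r1' unfolding e_def by auto
  have "phi f zs v < ereal (r2 + e)" using e by (intro order.strict_trans1[OF v]) simp
  then obtain b where b: "b \<in> f v" "- zs b < r2 + e" unfolding phi_lt_iff by auto
  obtain a where a: "a \<in> f u" "- zs a < r1'" using r1'(1) unfolding phi_lt_iff by auto
  have "phi f zs (l *\<^sub>R u + (1 - l) *\<^sub>R v) \<le> ereal (- zs (l *\<^sub>R a + (1 - l) *\<^sub>R b))"
    by (rule phi_le[where f=f, OF sv_mem[OF fc l a(1) b(1)]])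
  also have "- zs (l *\<^sub>R a + (1 - l) *\<^sub>R b) = l * (- zs a) + (1 - l) * (- zs b)"
    using linear_add[OF lin] linear_scale[OF lin] by simp
  also have "\<dots> < l * r1' + (1 - l) * (r2 + e)"
    using a b l by (intro add_less_le_mono mult_strict_left_mono mult_left_mono) auto
  also have "\<dots> = l * r1 + (1 - l) * r2" using l unfolding e_def by (simp add: field_simps)
  finally show ?thesis by simp
qed



lemma comb: "l *\<^sub>R y + (1 - l) *\<^sub>R x = x + l *\<^sub>R (y - (x::'a::real_vector))"
  by (simp add: algebra_simps)

lemma part1:
  fixes C :: "'z::{real_vector,t2_space} set"
    and f :: "'x::real_vector \<Rightarrow> 'z set"
    and x0 :: 'x
  assumes lc: "lc_tvs TYPE('z)"
    and C_cone: "cone C" and C0: "0 \<in> C"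
    and C_dual: "neg_dual_cone C - {\<lambda>_. 0} \<noteq> {}"
    and f_G: "\<forall>x. f x \<in> G_space C"
    and f_convex: "sv_convex f"
    and minv: "is_Min_value f x0"
    and fx: "f x \<noteq> f x0"
  shows "\<exists>zs \<in> neg_dual_cone C - {\<lambda>_. 0}. phi f zs x \<noteq> -\<infinity> \<and> phi_dir f zs x (x0 - x) < 0"
proof (cases "f x = {}")
  case True
  obtain zs where zs: "zs \<in> neg_dual_cone C - {\<lambda>_. 0}" using C_dual by blast
  have px: "phi f zs x = \<infinity>" using phi_empty[where f=f, OF True] .
  have "phi_dir f zs x (x0 - x) \<le> ereal (1 / 1) * ediff (phi f zs (x + 1 *\<^sub>R (x0 - x))) (phi f zs x)"
    by (rule phi_dir_le) simp
  then have "phi_dir f zs x (x0 - x) < 0" unfolding px ediff_PInf by simp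
  then show ?thesis using zs px by (intro bexI[of _ zs]) auto
next
  case False
  have "\<not> f x0 \<subseteq> f x" using minv fx unfolding is_Min_value_def by blast
  then obtain z0 where z0: "z0 \<in> f x0" "z0 \<notin> f x" by blast
  define B' where "B' = convex hull (sum_set (f x) C)"
  have fxB: "f x = closure B'" using f_G unfolding G_space_def B'_def by blast
  have U0: "open (- closure B')" "z0 \<in> - closure B'" using z0 fxB by auto
  obtain U where U: "open U" "convex U" "z0 \<in> U" "U \<subseteq> - closure B'"
    using lc U0 unfolding lc_tvs_def by blast
  have disj: "U \<inter> B' = {}" using U closure_subset by blast
  obtain b0 where b0: "b0 \<in> f x" using False by blast
  have sumB: "b + c \<in> B'" if "b \<in> f x" "c \<in> C" for b c
    unfolding B'_def using that hull_subset[of "sum_set (f x) C" convex] unfolding sum_set_def by blast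
  have b0B: "b0 \<in> B'" using sumB[OF b0] C0 by force
  have Bne: "B' \<noteq> {}" using b0B by blast
  obtain g :: "'z \<Rightarrow> real" and e :: real where g: "linear g" "continuous_on UNIV g" "e > 0" "1 \<le> g (b0 - z0)"
    and ge: "\<forall>b\<in>B'. g z0 + e \<le> g b"
    using separation[OF lc convex_convex_hull[of "sum_set (f x) C"] Bne[unfolded B'_def] U(1,2,3) disj[unfolded B'_def] b0B[unfolded B'_def]]
    unfolding B'_def by blast
  have clo: "closed (g -` {g z0 + e..})"
    using continuous_on_closed_vimage[of UNIV g] g(2) by auto
  have geB: "g z0 + e \<le> g b" if "b \<in> f x" for b
  proof -
    have "B' \<subseteq> g -` {g z0 + e..}" using ge by auto
    then have "closure B' \<subseteq> g -` {g z0 + e..}" using closure_minimal clo by blast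
    then show ?thesis using that fxB by auto
  qed
  define zs where "zs = (\<lambda>z. - g z)"
  have zslin: "linear zs" unfolding zs_def using g(1) by (simp add: linear_compose_neg)
  have zscont: "continuous_on UNIV zs" unfolding zs_def using g(2) by (intro continuous_intros)
  have zsC: "zs c \<le> 0" if c: "c \<in> C" for c
  proof (rule ccontr)
    assume "\<not> zs c \<le> 0"
    then have gc: "g c < 0" unfolding zs_def by simp
    define t where "t = (g b0 - g z0 - e + 1) / (- g c)"
    have t0: "t \<ge> 0" using geB[OF b0] gc unfolding t_def by (intro divide_nonneg_pos) auto
    have "t *\<^sub>R c \<in> C" using C_cone c t0 unfolding cone_def by blast
    then have "g z0 + e \<le> g (b0 + t *\<^sub>R c)" using ge sumB[OF b0] by blast
    also have "g (b0 + t *\<^sub>R c) = g b0 + t * g c" using linear_add[OF g(1)] linear_scale[OF g(1)] by simp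
    also have "t * g c = - (g b0 - g z0 - e + 1)" using gc unfolding t_def by (simp add: field_simps)
    finally show False by simp
  qed
  have zsD: "zs \<in> neg_dual_cone C" unfolding neg_dual_cone_def top_dual_def using zslin zscont zsC by auto
  have zsnz: "zs \<noteq> (\<lambda>_. 0)"
  proof
    assume "zs = (\<lambda>_. 0)"
    then have "g (b0 - z0) = 0" unfolding zs_def by (metis neg_equal_0_iff_equal)
    then show False using g(4) by simp
  qed
  have neg: "- ereal (zs z) = ereal (g z)" for z unfolding zs_def by simp
  have px_ge: "ereal (g z0 + e) \<le> phi f zs x"
    unfolding phi_def neg using geB by (auto intro: INF_greatest)
  have px_fin: "phi f zs x < \<infinity>" using phi_ne[where f=f, OF False] .
  define px where "px = real_of_ereal (phi f zs x)"
  have pxe: "phi f zs x = ereal px" unfolding px_def using px_ge px_fin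
    by (cases "phi f zs x") auto
  have pxge: "g z0 + e \<le> px" using px_ge pxe by simp
  have p0: "phi f zs x0 \<le> ereal (g z0)" using phi_le[of z0 f x0 zs] z0 neg by simp
  then have p0': "phi f zs x0 < ereal (g z0 + e / 2)" using g(3)
    by (intro order.strict_trans1[OF p0]) simp
  have mid: "phi f zs ((1/2) *\<^sub>R x0 + (1 - 1/2) *\<^sub>R x) < ereal ((1/2) * (g z0 + e / 2) + (1 - 1/2) * px)"
    by (rule phi_conv[OF f_convex zslin _ _ p0']) (auto simp: pxe)
  also have "\<dots> \<le> ereal px" using pxge g(3) by (simp add: field_simps)
  finally have "phi f zs (x + (1/2) *\<^sub>R (x0 - x)) < ereal px" by (simp only: comb)
  then have "ediff (phi f zs (x + (1/2) *\<^sub>R (x0 - x))) (phi f zs x) < 0"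
    unfolding pxe by (rule ediff_lt)
  then have "ereal (1 / (1/2)) * ediff (phi f zs (x + (1/2) *\<^sub>R (x0 - x))) (phi f zs x) < 0"
    by (intro ereal_mult_neg) auto
  then have "phi_dir f zs x (x0 - x) < 0"
    using phi_dir_le[of "1/2" f zs x "x0 - x"] by simp
  then show ?thesis using zsD zsnz pxe by (intro bexI[of _ zs]) auto
qed



lemma part2:
  fixes C :: "'z::{real_vector,t2_space} set"
    and f :: "'x::real_vector \<Rightarrow> 'z set"
    and x0 :: 'x
  assumes lc: "lc_tvs TYPE('z)"
    and f_G: "\<forall>x. f x \<in> G_space C"
    and f_convex: "sv_convex f"
    and x0_dom: "x0 \<in> sv_dom f"
    and Mfin: "finite M" and MC: "M \<subseteq> neg_dual_cone C - {\<lambda>_. 0}"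
    and H1: "\<forall>x. f x \<noteq> f x0 \<longrightarrow>
               (\<exists>zs \<in> M. phi f zs x \<noteq> -\<infinity> \<and> phi_dir f zs x (x0 - x) < 0)"
    and H2: "\<forall>x. \<forall>zs \<in> M.
               lsc_at_pt (\<lambda>t. if t \<in> {0..1} then phi f zs (x0 + t *\<^sub>R (x - x0)) else \<infinity>) 0"
  shows "is_Min_value f x0"
  unfolding is_Min_value_def
proof (intro allI impI, rule ccontr)
  fix x assume sub: "f x0 \<subseteq> f x" and ne: "f x \<noteq> f x0"
  define P where "P t = x0 + t *\<^sub>R (x - x0)" for t
  have fx0ne: "f x0 \<noteq> {}" using x0_dom unfolding sv_dom_def by auto
  have P0: "P 0 = x0" unfolding P_def by simp
  have P1: "P 1 = x" unfolding P_def by simp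
  have Pcomb: "P s = s *\<^sub>R x + (1 - s) *\<^sub>R x0" for s unfolding P_def by (simp add: comb)
  have Pconv: "P (l * a + (1 - l) * b) = l *\<^sub>R P a + (1 - l) *\<^sub>R P b" for l a b
    unfolding P_def by (simp add: algebra_simps)
  have Pdir: "P s + \<tau> *\<^sub>R (x0 - P s) = P (s - \<tau> * s)" for s \<tau>
    unfolding P_def by (simp add: algebra_simps)
  have F1: "f x0 \<subseteq> f (P s)" if s: "0 \<le> s" "s \<le> 1" for s
  proof (cases "s = 0 \<or> s = 1")
    case True then show ?thesis using P0 P1 sub by auto
  next
    case False
    then have s': "0 < s" "s < 1" using s by auto
    show ?thesis
    proof
      fix a assume a: "a \<in> f x0"
      have "s *\<^sub>R a + (1 - s) *\<^sub>R a \<in> f (s *\<^sub>R x + (1 - s) *\<^sub>R x0)"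
        using sv_mem[OF f_convex s'] a sub by blast
      moreover have "s *\<^sub>R a + (1 - s) *\<^sub>R a = a" by (simp add: algebra_simps)
      ultimately show "a \<in> f (P s)" unfolding Pcomb by simp
    qed
  qed
  have eq0: "f x0 = closure (convex hull (sum_set (f x0) C))" using f_G unfolding G_space_def by blast
  have closed0: "closed (f x0)" using arg_cong[OF eq0, of closed] by simp
  have F2: "f (P s) \<noteq> f x0" if s: "0 < s" "s < 1" for s
  proof
    assume eq: "f (P s) = f x0"
    obtain z where z: "z \<in> f x" "z \<notin> f x0" using sub ne by blast
    obtain a where a: "a \<in> f x0" using fx0ne by blast
    have step: "s *\<^sub>R z + (1 - s) *\<^sub>R a' \<in> f x0" if "a' \<in> f x0" for a'
      using sv_mem[OF f_convex s z(1) that] eq unfolding Pcomb by simp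
    define an where "an n = z + ((1 - s) ^ n) *\<^sub>R (a - z)" for n
    have an_in: "an n \<in> f x0" for n
    proof (induction n)
      case 0 then show ?case using a unfolding an_def by simp
    next
      case (Suc n)
      have "an (Suc n) = s *\<^sub>R z + (1 - s) *\<^sub>R an n"
        unfolding an_def by (simp add: algebra_simps)
      then show ?case using step[OF Suc] by simp
    qed
    have lim1: "(\<lambda>n. (1 - s) ^ n) \<longlonglongrightarrow> 0" using s by (intro LIMSEQ_power_zero) auto
    have "isCont (\<lambda>t. z + t *\<^sub>R (a - z)) 0"
      using lc_cont_ray[OF lc, of z "a - z"] continuous_on_eq_continuous_at[of UNIV] by auto
    from isCont_tendsto_compose[OF this lim1] have "an \<longlonglongrightarrow> z" unfolding an_def by simp
    moreover have "eventually (\<lambda>n. an n \<in> f x0) sequentially" using an_in by simp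
    ultimately have "z \<in> f x0" using Lim_in_closed_set[OF closed0 _ trivial_limit_sequentially] by blast
    then show False using z by blast
  qed
  have key: "\<exists>\<delta>>0. \<forall>s. 0 < s \<and> s < \<delta> \<and> s < 1 \<longrightarrow>
      \<not> (phi f zs (P s) \<noteq> -\<infinity> \<and> phi_dir f zs (P s) (x0 - P s) < 0)" if zsM: "zs \<in> M" for zs
  proof (rule ccontr)
    assume "\<not> ?thesis"
    then have bad: "\<forall>\<delta>>0. \<exists>s. 0 < s \<and> s < \<delta> \<and> s < 1 \<and> phi f zs (P s) \<noteq> -\<infinity> \<and> phi_dir f zs (P s) (x0 - P s) < 0"
      by blast
    have lin: "linear zs" using zsM MC unfolding neg_dual_cone_def top_dual_def by auto
    define H where "H t = phi f zs (P t)" for t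
    have Hle: "H s \<le> H 0" if "0 \<le> s" "s \<le> 1" for s
      unfolding H_def using phi_mono[where f=f, OF F1[OF that]] P0 by simp
    have H0fin: "H 0 < \<infinity>" unfolding H_def P0 using phi_ne[where f=f, OF fx0ne] .
    have Hconv: "H (l * a + (1 - l) * b) < ereal (l * r1 + (1 - l) * r2)"
      if "0 < l" "l < 1" "H a < ereal r1" "H b \<le> ereal r2" for l a b r1 r2
      using phi_conv[OF f_convex lin that(1,2), of "P a" r1 "P b" r2] that(3,4)
      unfolding H_def Pconv by simp
    have bad2: "\<exists>t s. 0 < t \<and> t < s \<and> s < \<delta> \<and> s < 1 \<and> H t < H s \<and> (\<exists>hs. H s = ereal hs)"
      if d: "\<delta> > 0" for \<delta>
    proof -
      obtain s where s: "0 < s" "s < \<delta>" "s < 1" "H s \<noteq> -\<infinity>" "phi_dir f zs (P s) (x0 - P s) < 0"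
        using bad d unfolding H_def by blast
      obtain \<tau> where tau: "\<tau> > 0"
        "ereal (1 / \<tau>) * ediff (phi f zs (P s + \<tau> *\<^sub>R (x0 - P s))) (phi f zs (P s)) < 0"
        using s(5) unfolding phi_dir_def by (auto simp: INF_less_iff)
      define hs where "hs = real_of_ereal (H s)"
      have Hs0: "H s \<le> H 0" using Hle[of s] s by simp
      have hsfin: "H s = ereal hs"
      proof (cases "H s")
        case (real r) then show ?thesis unfolding hs_def by simp
      next
        case PInf then show ?thesis using Hs0 H0fin by simp
      next
        case MInf then show ?thesis using s(4) by simp
      qed
      define t where "t = s - \<tau> * s"
      have "ediff (phi f zs (P s + \<tau> *\<^sub>R (x0 - P s))) (phi f zs (P s)) < 0"
        using ereal_mult_neg_rev[OF _ tau(2)] tau(1) by simp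
      then have "ediff (H t) (ereal hs) < 0"
        unfolding Pdir H_def[symmetric] hsfin t_def .
      then have lt: "H t < ereal hs" by (rule ediff_neg)
      have ts: "t < s" unfolding t_def using tau(1) s(1) by simp
      have t0: "t > 0"
      proof (rule ccontr)
        assume "\<not> t > 0"
        then consider "t = 0" | "t < 0" by linarith
        then show False
        proof cases
          case 1
          then have "H 0 < H s" using lt hsfin by simp
          then show False using Hs0 by simp
        next
          case 2
          obtain r1 where r1: "H t < ereal r1" "r1 < hs" using ereal_dense2[OF lt] by auto
          define l where "l = s / (s - t)"
          have st: "s - t > 0" using 2 s(1) by simp
          have l: "0 < l" "l < 1" using 2 s(1) st unfolding l_def by (auto simp: field_simps)
          have "(l * t + (1 - l) * s) * (s - t) = 0 * (s - t)"
            using st unfolding l_def by (simp add: field_simps)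
          then have lt0: "l * t + (1 - l) * s = 0" using st by simp
          have Hsle: "H s \<le> ereal hs" using hsfin by simp
          have "H (l * t + (1 - l) * s) < ereal (l * r1 + (1 - l) * hs)"
            by (rule Hconv[OF l r1(1) Hsle])
          then have "H 0 < ereal (l * r1 + (1 - l) * hs)" unfolding lt0 .
          also have "l * r1 + (1 - l) * hs < hs"
          proof -
            have "l * r1 < l * hs" using l r1(2) by simp
            then show ?thesis by (simp add: algebra_simps)
          qed
          finally have "H 0 < H s" using hsfin by simp
          then show False using Hs0 by simp
        qed
      qed
      have "H t < H s" using lt hsfin by simp
      then have "0 < t \<and> t < s \<and> s < \<delta> \<and> s < 1 \<and> H t < H s \<and> (\<exists>hs. H s = ereal hs)"
        using t0 ts s hsfin by auto
      then show ?thesis by blast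
    qed
    obtain t1 s1 where ts1: "0 < t1" "t1 < s1" "s1 < 1" "H t1 < H s1" "\<exists>hs. H s1 = ereal hs"
      using bad2[of 1] by auto
    have lsc: "lsc_at_pt (\<lambda>t. if t \<in> {0..1} then H t else \<infinity>) 0"
      using H2 zsM unfolding H_def P_def by auto
    have claim: "ereal y < H v" if v: "0 < v" "v \<le> 1" and y: "ereal y < H 0" for v y
    proof -
      have "eventually (\<lambda>t. ereal y < (if t \<in> {0..1} then H t else \<infinity>)) (at 0)"
        using lsc y unfolding lsc_at_pt_def by auto
      then obtain d where d: "d > 0" "\<forall>t. t \<noteq> 0 \<and> dist t 0 < d \<longrightarrow> ereal y < (if t \<in> {0..1} then H t else \<infinity>)"
        unfolding eventually_at by auto
      obtain t s where ts: "0 < t" "t < s" "s < min d v" "s < 1" "H t < H s" "\<exists>hs. H s = ereal hs"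
        using bad2[of "min d v"] d v by auto
      obtain hs where hse: "H s = ereal hs" using ts(6) by blast
      have ys: "y < hs" using d(2)[rule_format, of s] ts using hse by (auto simp: dist_real_def)
      show ?thesis
      proof (rule ccontr)
        assume "\<not> ereal y < H v"
        then have Hv: "H v \<le> ereal y" by simp
        obtain r1 where r1: "H t < ereal r1" "r1 < hs" using ereal_dense2[OF ts(5)] hse by auto
        define l where "l = (v - s) / (v - t)"
        have l: "0 < l" "l < 1" using ts unfolding l_def by (auto simp: field_simps)
        have vt: "v - t > 0" using ts by simp
        have lvt: "l * (v - t) = v - s" unfolding l_def using vt by simp
        have "l * t + (1 - l) * v = v - l * (v - t)" by (simp add: algebra_simps)
        then have "l * t + (1 - l) * v = s" using lvt by simp
        then have "H s < ereal (l * r1 + (1 - l) * y)" using Hconv[OF l r1(1) Hv] by simp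
        also have "l * r1 + (1 - l) * y < hs"
        proof -
          have "l * r1 < l * hs" using l r1(2) by simp
          moreover have "(1 - l) * y \<le> (1 - l) * hs" using l ys by (intro mult_left_mono) auto
          ultimately show ?thesis by (simp add: algebra_simps)
        qed
        finally show False using hse by simp
      qed
    qed
    have "H 0 \<le> H t1"
    proof (rule ccontr)
      assume "\<not> H 0 \<le> H t1"
      then obtain y where y: "H t1 < ereal y" "ereal y < H 0" using ereal_dense2 by (meson not_le)
      have "ereal y < H t1" using claim[OF ts1(1) _ y(2)] ts1 by simp
      then show False using y by simp
    qed
    moreover have "H s1 \<le> H 0" using Hle ts1 by simp
    ultimately show False using ts1(4) by simp
  qed
  then have "\<forall>zs\<in>M. \<exists>\<delta>>0. \<forall>s. 0 < s \<and> s < \<delta> \<and> s < 1 \<longrightarrow>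
      \<not> (phi f zs (P s) \<noteq> -\<infinity> \<and> phi_dir f zs (P s) (x0 - P s) < 0)" by blast
  from bchoice[OF this] obtain \<delta> where \<delta>: "\<forall>zs\<in>M. \<delta> zs > 0 \<and> (\<forall>s. 0 < s \<and> s < \<delta> zs \<and> s < 1 \<longrightarrow>
      \<not> (phi f zs (P s) \<noteq> -\<infinity> \<and> phi_dir f zs (P s) (x0 - P s) < 0))"
    by blast
  have Mne: "M \<noteq> {}" using H1 ne by auto
  define dm where "dm = Min (\<delta> ` M)"
  have dm: "dm > 0" unfolding dm_def using Mfin Mne \<delta> by (subst Min_gr_iff) auto
  define s where "s = min dm 1 / 2"
  have s: "0 < s" "s < 1" "s < dm" using dm unfolding s_def by auto
  obtain zs where zs: "zs \<in> M" "phi f zs (P s) \<noteq> -\<infinity>" "phi_dir f zs (P s) (x0 - P s) < 0"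
    using H1 F2[OF s(1,2)] by blast
  have "dm \<le> \<delta> zs" unfolding dm_def using Mfin zs(1) by simp
  then show False using \<delta> zs s by force
qed


theorem mainTheorem4:
  fixes C :: "'z::{real_vector,t2_space} set"
    and f :: "'x::real_vector \<Rightarrow> 'z set"
    and x0 :: 'x
  assumes lc: "lc_tvs TYPE('z)"
    and C_closed: "closed C" and C_convex: "convex C" and C_cone: "cone C" and C_0: "0 \<in> C"
    and C_dual: "neg_dual_cone C - {\<lambda>_. 0} \<noteq> {}"
    and f_G: "\<forall>x. f x \<in> G_space C"
    and f_convex: "sv_convex f"
    and x0_dom: "x0 \<in> sv_dom f"
  shows "(is_Min_value f x0 \<longrightarrow>
            (\<forall>x. f x \<noteq> f x0 \<longrightarrow>
               (\<exists>zs \<in> neg_dual_cone C - {\<lambda>_. 0}.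
                  phi f zs x \<noteq> -\<infinity> \<and> phi_dir f zs x (x0 - x) < 0)))
       \<and> (\<forall>M. finite M \<and> M \<subseteq> neg_dual_cone C - {\<lambda>_. 0} \<and>
            (\<forall>x. f x \<noteq> f x0 \<longrightarrow>
               (\<exists>zs \<in> M. phi f zs x \<noteq> -\<infinity> \<and> phi_dir f zs x (x0 - x) < 0)) \<and>
            (\<forall>x. \<forall>zs \<in> M.
               lsc_at_pt (\<lambda>t. if t \<in> {0..1} then phi f zs (x0 + t *\<^sub>R (x - x0)) else \<infinity>) 0)
            \<longrightarrow> is_Min_value f x0)"
proof (intro conjI allI impI)
  fix x assume minv: "is_Min_value f x0" and fx: "f x \<noteq> f x0"
  show "\<exists>zs \<in> neg_dual_cone C - {\<lambda>_. 0}. phi f zs x \<noteq> -\<infinity> \<and> phi_dir f zs x (x0 - x) < 0"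
    by (rule part1[OF lc C_cone C_0 C_dual f_G f_convex minv fx])
next
  fix M assume hM: "finite M \<and> M \<subseteq> neg_dual_cone C - {\<lambda>_. 0} \<and>
            (\<forall>x. f x \<noteq> f x0 \<longrightarrow>
               (\<exists>zs \<in> M. phi f zs x \<noteq> -\<infinity> \<and> phi_dir f zs x (x0 - x) < 0)) \<and>
            (\<forall>x. \<forall>zs \<in> M.
               lsc_at_pt (\<lambda>t. if t \<in> {0..1} then phi f zs (x0 + t *\<^sub>R (x - x0)) else \<infinity>) 0)"
  show "is_Min_value f x0"
    using part2[OF lc f_G f_convex x0_dom] hM by blast
qed

end
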